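(* For $j\in\mathbb{Z}_{\ge0}$, setting $U_j(x,y)=\sum_{l_1\ge0}\sum_{l_2\ge j}\beta_E(l_1+l_2+1)\beta_E(l_2)x^{l_1}y^{l_2}$ and $B_j(y)=\sum_{l\ge0}\beta_E(l+j)^2y^l$, one has \[ U_j(x,y)=y^j\cdot\frac{(q^{-1}\lambda-q^{-1}x-q^{-2}xy)B_j(y)+\beta_E(j)\beta_E(j+1)-q^{-1}\lambda\,\beta_E(j)^2}{(1-\lambda q^{-1}x+q^{-1}x^2)(1+q^{-1}y)}. \]
   Context: $F$ is a $p$-adic field with odd residue cardinality $q$, uniformizer $\varpi$. $\pi$ is an irreducible unitary unramified representation of $\mathrm{GL}_2(F)$ with trivial central character, a quotient of $\chi\times\chi^{-1}$ with $\chi$ unramified; $\alpha=\chi(\varpi)$, $\lambda=q^{1/2}(\alpha+\alpha^{-1})$. $\phi$ is the spherical unit vector, $E$ a quadratic étale algebra over $F$, $\alpha_E(\phi_1,\phi_2)=\int_{F^\times\backslash E^\times}\langle\pi(t)\phi_1,\phi_2\rangle d^\times t$ with $\alpha_E(\phi,\phi)\ne0$, and $\beta_E(l)=\alpha_E(\pi(\mathrm{diag}(\varpi^{-l},1))\phi,\phi)/\alpha_E(\phi,\phi)$, satisfying $q\beta_E(l+2)-\lambda\beta_E(l+1)+\beta_E(l)=0$. *)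

theory Defs
  imports "HOL-Computational_Algebra.Computational_Algebra" "HOL-Number_Theory.Number_Theory"
begin

text \<open>Two-variable formal power series over the complex numbers are modelled as
  power series in y whose coefficients are power series in x:
  type complex fps fps.  The outer variable is y, the inner one is x.\<close>

definition varX :: "complex fps fps" where
  "varX = fps_const fps_X"

definition varY :: "complex fps fps" where
  "varY = fps_X"

definition cst :: "complex \<Rightarrow> complex fps fps" where
  "cst c = fps_const (fps_const c)"

definition U_ser :: "(nat \<Rightarrow> complex) \<Rightarrow> nat \<Rightarrow> complex fps fps" where
  "U_ser \<beta> j = Abs_fps (\<lambda>l2. if j \<le> l2
       then Abs_fps (\<lambda>l1. \<beta> (l1 + l2 + 1) * \<beta> l2) else 0)"

definition B_ser :: "(nat \<Rightarrow> complex) \<Rightarrow> nat \<Rightarrow> complex fps fps" where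
  "B_ser \<beta> j = Abs_fps (\<lambda>l. fps_const ((\<beta> (l + j))\<^sup>2))"

end

theory Submission
  imports Defs
begin

lemma inner_nth:
  fixes F :: "complex fps"
  shows "(F * (1 - fps_const a * fps_X + fps_const b * fps_X^2)) $ m
     = F$m - a*(if m=0 then 0 else F$(m-1)) + b*(if m<2 then 0 else F$(m-2))"
proof -
  have "F * (1 - fps_const a * fps_X + fps_const b * fps_X^2)
      = F - fps_const a * (fps_X * F) + fps_const b * (fps_X^2 * F)"
    by (simp add: algebra_simps)
  then show ?thesis by (simp add: fps_X_power_mult_nth)
qed

lemma outer_nth:
  fixes G :: "complex fps fps"
  shows "(G * (1 + fps_const c * fps_X)) $ n = G$n + c*(if n=0 then 0 else G$(n-1))"
proof -
  have "G * (1 + fps_const c * fps_X) = G + fps_const c * (fps_X * G)"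
    by (simp add: algebra_simps)
  then show ?thesis by (simp add: mult.commute)
qed

lemma u_simp:
  fixes Q lam :: complex and beta :: "nat \<Rightarrow> complex"
  assumes Q: "Q \<noteq> 0" and rec: "\<And>l. Q * beta (l + 2) - lam * beta (l + 1) + beta l = 0"
  shows "beta (m+l+1) * beta l - lam/Q*(if m=0 then 0 else beta (m-1+l+1) * beta l)
          + 1/Q*(if m<2 then 0 else beta (m-2+l+1) * beta l)
       = (if m=0 then beta (l+1) * beta l else if m=1 then - (beta l)\<^sup>2/Q else 0)"
proof -
  consider "m=0" | "m=1" | k where "m = k+2" proof (cases m)
    case (Suc m') then show ?thesis using that by (cases m') auto
  qed (use that in auto)
  then show ?thesis
  proof cases
    case 1 then show ?thesis by simp
  next
    case 2
    have h: "Q * beta (l + 2) - lam * beta (l + 1) = - beta l" using rec[of l] by (simp add: algebra_simps)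
    have "beta (l+2)*beta l - lam/Q*(beta(l+1)*beta l) = (Q * beta (l + 2) - lam * beta (l + 1))*beta l / Q"
      using Q by (simp add: field_simps)
    also have "... = - (beta l)\<^sup>2/Q" unfolding h by (simp add: power2_eq_square)
    finally show ?thesis using 2 by (simp add: add.commute)
  next
    case 3
    have h: "Q * beta (k+l+1 + 2) - lam * beta (k+l+1 + 1) + beta (k+l+1) = 0" by (rule rec)
    have "beta (k+2+l+1) * beta l - lam/Q*(beta (k+l+2) * beta l) + 1/Q*(beta (k+l+1) * beta l)
        = (Q * beta (k+l+1 + 2) - lam * beta (k+l+1 + 1) + beta (k+l+1)) * beta l / Q"
      using Q by (simp add: field_simps add.assoc)
    also have "... = 0" unfolding h by simp
    finally show ?thesis using 3 by (simp add: add.commute add.left_commute)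
  qed
qed


theorem proposition4p4:
  fixes q :: nat and alpha lam :: complex and beta :: "nat \<Rightarrow> complex" and j :: nat
  assumes "odd q" and "\<exists>p k. prime p \<and> k \<ge> 1 \<and> q = p ^ k"
    and "alpha \<noteq> 0"
    and "lam = complex_of_real (sqrt (real q)) * (alpha + inverse alpha)"
    and "beta 0 = 1"
    and rec: "\<And>l. of_nat q * beta (l + 2) - lam * beta (l + 1) + beta l = 0"
  shows "U_ser beta j * ((1 - cst (lam / of_nat q) * varX + cst (1 / of_nat q) * varX ^ 2)
                      * (1 + cst (1 / of_nat q) * varY))
         = varY ^ j * ((cst (lam / of_nat q) - cst (1 / of_nat q) * varX
                         - cst (1 / (of_nat q)\<^sup>2) * varX * varY) * B_ser beta j
                       + cst (beta j * beta (j + 1) - lam / of_nat q * (beta j)\<^sup>2))"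
proof -
  define Q :: complex where "Q = of_nat q"
  have Q: "Q \<noteq> 0" using assms(1) unfolding Q_def by (metis odd_pos of_nat_eq_0_iff neq0_conv)
  have recQ: "\<And>l. Q * beta (l + 2) - lam * beta (l + 1) + beta l = 0" using rec unfolding Q_def .
  define p where "p = 1 - fps_const (lam/Q) * fps_X + fps_const (1/Q) * (fps_X::complex fps)^2"
  define U where "U = U_ser beta j"
  define B where "B = B_ser beta j"
  have h1: "1 - cst (lam / Q) * varX + cst (1 / Q) * varX ^ 2 = fps_const p"
    unfolding p_def cst_def varX_def by (simp add: fps_const_power fps_const_mult)
  have h2: "(cst (lam / Q) - cst (1 / Q) * varX - cst (1 / Q\<^sup>2) * varX * varY) * B
     = fps_const (fps_const (lam/Q)) * B - fps_const (fps_const (1/Q) * fps_X) * B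
       - fps_const (fps_const (1/Q\<^sup>2) * fps_X) * (fps_X * B)"
    unfolding cst_def varX_def varY_def by (simp add: algebra_simps del: fps_const_sub fps_const_add fps_const_neg)
  have hU: "(U * fps_const p) $ l = (if j \<le> l then Abs_fps (\<lambda>m. if m=0 then beta (l+1) * beta l
        else if m=1 then - (beta l)\<^sup>2/Q else 0) else 0)" for l
  proof (cases "j \<le> l")
    case True
    show ?thesis
    proof (rule fps_ext)
      fix m
      show "(U * fps_const p) $ l $ m = (if j \<le> l then Abs_fps (\<lambda>m. if m=0 then beta (l+1) * beta l
        else if m=1 then - (beta l)\<^sup>2/Q else 0) else 0) $ m"
      proof -
        have "(U * fps_const p) $ l $ m = beta (m+l+1) * beta l - lam/Q*(if m=0 then 0 else beta (m-1+l+1) * beta l)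
          + 1/Q*(if m<2 then 0 else beta (m-2+l+1) * beta l)"
          unfolding fps_mult_right_const_nth p_def inner_nth using True
          by (simp add: U_def U_ser_def)
        also have "... = (if m=0 then beta (l+1) * beta l else if m=1 then - (beta l)\<^sup>2/Q else 0)"
          by (rule u_simp[OF Q recQ])
        finally show ?thesis using True by simp
      qed
    qed
  qed (simp add: U_def U_ser_def)
  define H where "H = fps_const (fps_const (lam/Q)) * B - fps_const (fps_const (1/Q) * fps_X) * B
       - fps_const (fps_const (1/Q\<^sup>2) * fps_X) * (fps_X * B) + cst (beta j * beta (j + 1) - lam / Q * (beta j)\<^sup>2)"
  have hH: "H $ k $ m = (if m = 0 then lam/Q * (beta (k+j))\<^sup>2 else 0)
      - (if m = 1 then 1/Q * (beta (k+j))\<^sup>2 else 0)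
      - (if m = 1 \<and> k > 0 then 1/Q\<^sup>2 * (beta (k-1+j))\<^sup>2 else 0)
      + (if k = 0 \<and> m = 0 then beta j * beta (j + 1) - lam / Q * (beta j)\<^sup>2 else 0)" for k m
    unfolding H_def by (simp add: B_def B_ser_def cst_def)
  have hr2: "beta (Suc (Suc n)) * beta (Suc n) + beta (Suc n) * beta n / Q = lam * (beta (Suc n))\<^sup>2 / Q" for n
  proof -
    have "Q * beta (n + 2) - lam * beta (n + 1) + beta n = 0" by (rule recQ)
    then have eq: "beta (Suc (Suc n)) * Q + beta n = lam * beta (Suc n)" 
      by (simp add: algebra_simps numeral_2_eq_2) 
    have "beta (Suc (Suc n)) * beta (Suc n) + beta (Suc n) * beta n / Q = beta (Suc n) * (beta (Suc (Suc n)) * Q + beta n) / Q"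
      using Q by (simp add: field_simps)
    also have "... = lam * (beta (Suc n))\<^sup>2 / Q" unfolding eq by (simp add: power2_eq_square)
    finally show ?thesis .
  qed
  have "U * (fps_const p * (1 + fps_const (fps_const (1/Q)) * fps_X)) = fps_X ^ j * H"
  proof (rule fps_ext)
    fix n
    show "(U * (fps_const p * (1 + fps_const (fps_const (1/Q)) * fps_X))) $ n = (fps_X ^ j * H) $ n"
    proof (rule fps_ext)
      fix m
      show "(U * (fps_const p * (1 + fps_const (fps_const (1/Q)) * fps_X))) $ n $ m = (fps_X ^ j * H) $ n $ m"
        unfolding mult.assoc[symmetric] outer_nth fps_X_power_mult_nth hU
        apply (cases n)
         apply (simp add: hH)
        apply (simp add: hH hr2 power2_eq_square)
        done
    qed
  qed
  note core = this
  have e: "1 + cst (1 / Q) * varY = 1 + fps_const (fps_const (1/Q)) * fps_X" by (simp add: cst_def varY_def)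
  show ?thesis unfolding Q_def[symmetric] B_def[symmetric] U_def[symmetric] h1 e h2
    using core unfolding H_def mult.assoc[symmetric] varY_def .
qed

end
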